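(* Let $G$ satisfy the standing assumptions and assume additionally that there exists $\epsilon>0$ with $\lim_{z\to\infty} z^{2+\epsilon}\dot G(z)=0$. Then the function $$H:(0,\infty)\to\mathbb{R},\qquad H(A):=\frac{\int_0^A\frac{s\dot G(s)}{(A-s)^{1/p}}\,ds}{\int_0^A\frac{\dot G(s)}{(A-s)^{1/p}}\,ds}$$ is continuous and bounded on $(0,\infty)$, and satisfies $$\lim_{A\to0}H(A)=0,\qquad \lim_{A\to\infty}H(A)=\frac{2}{c_p(G)}\int_0^\infty s\dot G(s)\,ds.$$
   Context: Fix $p\in(1,\infty)$. Standing assumptions on $G$: $G \in C^\infty(\mathbb{R})$ is odd, $\dot G>0$, and $s\mapsto s\dot G(s)$ belongs to $L^1(\mathbb{R})$. $c_p(G):=2\lim_{s\to\infty}G(s)$. *)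

theory Defs
  imports "HOL-Analysis.Analysis"
begin

definition smooth_real :: "(real \<Rightarrow> real) \<Rightarrow> bool" where
  "smooth_real G \<longleftrightarrow> (\<forall>n x. ((deriv ^^ n) G) differentiable (at x))"

definition standing_G :: "(real \<Rightarrow> real) \<Rightarrow> bool" where
  "standing_G G \<longleftrightarrow> smooth_real G \<and> (\<forall>s. G (- s) = - G s) \<and> (\<forall>s. deriv G s > 0)
     \<and> integrable lborel (\<lambda>s. s * deriv G s)"

definition c_p :: "(real \<Rightarrow> real) \<Rightarrow> real" where
  "c_p G = 2 * Lim at_top G"

definition H_fun :: "real \<Rightarrow> (real \<Rightarrow> real) \<Rightarrow> real \<Rightarrow> real" where
  "H_fun p G A =
     (LBINT s:{0..A}. s * deriv G s / (A - s) powr (1 / p)) /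
     (LBINT s:{0..A}. deriv G s / (A - s) powr (1 / p))"

end

theory Submission
  imports Defs
begin


lemma weight_int:
  fixes q :: real assumes q: "0 < q" "q < 1"
  shows "set_integrable lborel {0..1} (\<lambda>u::real. 1 / u powr q)"
proof -
  have "(\<lambda>x::real. x powr (-q)) integrable_on {0..1}"
    using q by (intro integrable_on_powr_from_0) auto
  then have "(\<lambda>x::real. x powr (-q)) absolutely_integrable_on {0..1}"
    by (intro nonnegative_absolutely_integrable_1) auto
  then have "set_integrable lborel {0..1} (\<lambda>x::real. x powr (-q))"
    unfolding set_integrable_def
    by (subst (asm) integrable_completion) auto
  then show ?thesis by (simp add: powr_minus_divide)
qed



lemma subst_lemma:
  fixes f :: "real \<Rightarrow> real" and q A :: real
  assumes q: "0 < q" "q < 1" and A: "0 < A" and fc: "continuous_on UNIV f"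
  shows "set_integrable lborel {0..1} (\<lambda>u. f (A - A*u) / u powr q)"
    and "set_integrable lborel {0..A} (\<lambda>s. f s / (A - s) powr q)"
    and "(LBINT s:{0..A}. f s / (A - s) powr q) = A powr (1-q) * (LBINT u:{0..1}. f (A - A*u) / u powr q)"
proof -
  have fm[measurable]: "f \<in> borel_measurable borel" by (rule borel_measurable_continuous_onI[OF fc])
  have "compact (f ` {0..A})" by (rule compact_continuous_image) (auto intro: continuous_on_subset[OF fc])
  then obtain B where B: "\<And>s. s \<in> {0..A} \<Longrightarrow> norm (f s) \<le> B"
    using compact_imp_bounded bounded_iff by (metis image_eqI)
  show J: "set_integrable lborel {0..1} (\<lambda>u. f (A - A*u) / u powr q)"
  proof (rule set_integrable_bound[where f="\<lambda>u. B * (1 / u powr q)"])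
    show "set_integrable lborel {0..1} (\<lambda>u. B * (1 / u powr q))"
      using set_integrable_mult_right[OF weight_int[OF q], of B] by simp
    show "set_borel_measurable lborel {0..1} (\<lambda>u. f (A - A * u) / u powr q)"
      unfolding set_borel_measurable_def by measurable
    show "AE x in lborel. x \<in> {0..1} \<longrightarrow> norm (f (A - A * x) / x powr q) \<le> norm (B * (1 / x powr q))"
    proof (intro AE_I2 impI)
      fix x :: real assume x: "x \<in> {0..1}"
      then have "A - A*x \<in> {0..A}" using A by (auto simp: mult_le_cancel_left1)
      then have b: "norm (f (A - A*x)) \<le> B" by (rule B)
      then have "0 \<le> B" by (meson norm_ge_zero order_trans)
      show "norm (f (A - A * x) / x powr q) \<le> norm (B * (1 / x powr q))"
        using b \<open>0 \<le> B\<close> by (simp add: divide_right_mono abs_mult)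
    qed
  qed
  have pt: "indicator {0..A} (A + (-A) * u) *\<^sub>R (f (A + (-A)*u) / (A - (A + (-A)*u)) powr q)
      = A powr (-q) * (indicator {0..1} u *\<^sub>R (f (A - A*u) / u powr q))" for u :: real
  proof -
    have i: "indicator {0..A} (A - A * u) = (indicator {0..1} u :: real)"
      using A by (auto simp: indicator_def mult_le_cancel_left1 zero_le_mult_iff)
    have "(A - (A + (-A)*u)) powr q = A powr q * u powr q" by (simp add: powr_mult)
    then show ?thesis using A by (simp add: i powr_minus_divide)
  qed
  show "set_integrable lborel {0..A} (\<lambda>s. f s / (A - s) powr q)"
    unfolding set_integrable_def
    apply (subst lborel_integrable_real_affine_iff[where c="-A" and t=A, symmetric])
    using A apply simp
    unfolding pt using integrable_mult_right[of "A powr (-q)", OF J[unfolded set_integrable_def]] by simp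
  have "(LBINT s:{0..A}. f s / (A - s) powr q) = \<bar>-A\<bar> *\<^sub>R (LBINT u. A powr (-q) * (indicator {0..1} u *\<^sub>R (f (A - A*u) / u powr q)))"
    unfolding set_lebesgue_integral_def
    apply (subst lborel_integral_real_affine[where c="-A" and t=A])
    using A apply simp
    unfolding pt by simp
  also have "\<dots> = A * A powr (-q) * (LBINT u:{0..1}. f (A - A*u) / u powr q)"
    using A unfolding set_lebesgue_integral_def integral_mult_right_zero by simp
  also have "A * A powr (-q) = A powr (1 - q)"
    using A by (simp add: powr_diff powr_minus_divide)
  finally show "(LBINT s:{0..A}. f s / (A - s) powr q) = A powr (1-q) * (LBINT u:{0..1}. f (A - A*u) / u powr q)" .
qed



lemma J_cont:
  fixes f :: "real \<Rightarrow> real" and q :: real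
  assumes q: "0 < q" "q < 1" and fc: "continuous_on UNIV f"
  shows "isCont (\<lambda>A. LBINT u:{0..1}. f (A - A*u) / u powr q) A0"
proof (rule continuous_at_sequentiallyI)
  have fm[measurable]: "f \<in> borel_measurable borel" by (rule borel_measurable_continuous_onI[OF fc])
  fix X :: "nat \<Rightarrow> real" assume X: "X \<longlonglongrightarrow> A0"
  then have "Bseq X" using convergent_imp_Bseq convergentI by blast
  then obtain R where R: "0 < R" "\<And>n. norm (X n) \<le> R" by (auto elim: BseqE)
  have "compact (f ` {-R..R})" by (rule compact_continuous_image) (auto intro: continuous_on_subset[OF fc])
  then obtain B where B: "\<And>s. s \<in> {-R..R} \<Longrightarrow> norm (f s) \<le> B"
    using compact_imp_bounded bounded_iff by (metis image_eqI)
  have rng: "X n - X n * u \<in> {-R..R}" if "u \<in> {0..1}" for n u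
  proof -
    have "X n - X n * u = X n * (1 - u)" by (simp add: algebra_simps)
    moreover have "\<bar>X n * (1 - u)\<bar> \<le> R"
    proof -
      have "\<bar>X n * (1 - u)\<bar> = \<bar>X n\<bar> * (1 - u)" using that by (simp add: abs_mult)
      also have "\<dots> \<le> \<bar>X n\<bar> * 1" using that by (intro mult_left_mono) auto
      finally show ?thesis using R(2)[of n] by simp
    qed
    ultimately show ?thesis by auto
  qed
  have "(\<lambda>n. LBINT u. indicator {0..1} u *\<^sub>R (f (X n - X n*u) / u powr q)) \<longlonglongrightarrow> (LBINT u. indicator {0..1} u *\<^sub>R (f (A0 - A0*u) / u powr q))"
  proof (rule integral_dominated_convergence[where w="\<lambda>u. indicator {0..1} u *\<^sub>R (B * (1 / u powr q))"])
    show "integrable lborel (\<lambda>u. indicator {0..1} u *\<^sub>R (B * (1 / u powr q)))"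
      using set_integrable_mult_right[OF weight_int[OF q], of B] unfolding set_integrable_def by simp
    show "(\<lambda>u. indicator {0..1} u *\<^sub>R (f (A0 - A0*u) / u powr q)) \<in> borel_measurable lborel" by measurable
    show "(\<lambda>u. indicator {0..1} u *\<^sub>R (f (X n - X n*u) / u powr q)) \<in> borel_measurable lborel" for n by measurable
    show "AE u in lborel. (\<lambda>n. indicator {0..1} u *\<^sub>R (f (X n - X n*u) / u powr q)) \<longlonglongrightarrow> indicator {0..1} u *\<^sub>R (f (A0 - A0*u) / u powr q)"
    proof (intro AE_I2)
      fix u :: real
      have "(\<lambda>n. X n - X n * u) \<longlonglongrightarrow> A0 - A0 * u" by (intro tendsto_intros X)
      then have fl: "(\<lambda>n. f (X n - X n * u)) \<longlonglongrightarrow> f (A0 - A0 * u)"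
        by (rule isCont_tendsto_compose[rotated]) (use fc continuous_on_eq_continuous_at in auto)
      show "(\<lambda>n. indicator {0..1} u *\<^sub>R (f (X n - X n*u) / u powr q)) \<longlonglongrightarrow> indicator {0..1} u *\<^sub>R (f (A0 - A0*u) / u powr q)"
        using tendsto_scaleR[OF tendsto_const[of "indicator {0..1} u"] tendsto_mult_right[OF fl, of "1 / u powr q"]] by simp
    qed
    show "AE u in lborel. norm (indicator {0..1} u *\<^sub>R (f (X n - X n*u) / u powr q)) \<le> indicator {0..1} u *\<^sub>R (B * (1 / u powr q))" for n
    proof (intro AE_I2)
      fix u :: real
      show "norm (indicator {0..1} u *\<^sub>R (f (X n - X n*u) / u powr q)) \<le> indicator {0..1} u *\<^sub>R (B * (1 / u powr q))"
      proof (cases "u \<in> {0..1}")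
        case True
        then have b: "norm (f (X n - X n*u)) \<le> B" using B rng by blast
        then show ?thesis using True by (simp add: divide_right_mono)
      qed simp
    qed
  qed
  then show "(\<lambda>n. LBINT u:{0..1}. f (X n - X n*u) / u powr q) \<longlonglongrightarrow> (LBINT u:{0..1}. f (A0 - A0*u) / u powr q)"
    unfolding set_lebesgue_integral_def .
qed



lemma set_nonneg:
  fixes f :: "real \<Rightarrow> real"
  assumes "\<And>x. x \<in> S \<Longrightarrow> 0 \<le> f x"
  shows "0 \<le> (LBINT x:S. f x)"
  unfolding set_lebesgue_integral_def by (rule integral_nonneg_AE) (use assms in \<open>auto simp: indicator_def\<close>)

lemma ratio_lim: "((\<lambda>A::real. A / (A - x)) \<longlongrightarrow> 1) at_top"
proof -
  have "((\<lambda>A::real. 1 / (1 - x * inverse A)) \<longlongrightarrow> 1 / (1 - x * 0)) at_top"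
    by (intro tendsto_intros tendsto_inverse_0_at_top filterlim_ident) auto
  then have "((\<lambda>A::real. 1 / (1 - x * inverse A)) \<longlongrightarrow> 1) at_top" by simp
  moreover have "\<forall>\<^sub>F A in at_top. 1 / (1 - x * inverse A) = A / (A - x)"
    using eventually_gt_at_top[of "\<bar>x\<bar> + 1"]
  proof eventually_elim
    case (elim A)
    then have "A \<noteq> 0" "A - x \<noteq> 0" by auto
    then show ?case by (simp add: field_simps)
  qed
  ultimately show ?thesis by (rule Lim_transform_eventually)
qed

lemma main_limit:
  fixes f :: "real \<Rightarrow> real" and q :: real
  assumes q: "0 < q" "q < 1" and fc: "continuous_on UNIV f" and fnn: "\<And>s. 0 \<le> s \<Longrightarrow> 0 \<le> f s"
    and fi: "set_integrable lborel {0..} f" and ft: "((\<lambda>s. s * f s) \<longlongrightarrow> 0) at_top"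
  shows "((\<lambda>A. A powr q * (LBINT s:{0..A}. f s / (A - s) powr q)) \<longlongrightarrow> (LBINT s:{0..}. f s)) at_top"
proof -
  have fm[measurable]: "f \<in> borel_measurable borel" by (rule borel_measurable_continuous_onI[OF fc])
  define K where "K = (LBINT u:{0..1}. 1 / u powr q)"
  have K0: "0 \<le> K" unfolding K_def by (rule set_nonneg) auto
  define M where "M A = (LBINT s:{0..A/2}. A powr q * (f s / (A - s) powr q))" for A
  define T where "T A = (LBINT s:{A/2<..A}. A powr q * (f s / (A - s) powr q))" for A
  have intw: "set_integrable lborel {0..A} (\<lambda>s. A powr q * (f s / (A - s) powr q))" if "0 < A" for A
    using set_integrable_mult_right[OF subst_lemma(2)[OF q that fc], of "A powr q"] by simp
  have split: "A powr q * (LBINT s:{0..A}. f s / (A - s) powr q) = M A + T A" if A: "0 < A" for A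
  proof -
    have e1: "A powr q * (LBINT s:{0..A}. f s / (A - s) powr q) = (LBINT s:{0..A}. A powr q * (f s / (A - s) powr q))"
      by (rule set_integral_mult_right[symmetric])
    have eq: "{0..A} = {0..A/2} \<union> {A/2<..A}" using A by auto
    have e2: "(LBINT s:{0..A}. A powr q * (f s / (A - s) powr q)) = (LBINT s:{0..A/2} \<union> {A/2<..A}. A powr q * (f s / (A - s) powr q))"
      by (simp only: eq)
    have e3: "(LBINT s:{0..A/2} \<union> {A/2<..A}. A powr q * (f s / (A - s) powr q)) = M A + T A"
      unfolding M_def T_def
      by (rule set_integral_Un; (rule set_integrable_subset[OF intw[OF A]])?; auto)
    show ?thesis using e1 e2 e3 by simp
  qed
  have Mlim: "(M \<longlongrightarrow> (LBINT s:{0..}. f s)) at_top"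
    unfolding M_def set_lebesgue_integral_def
  proof (rule integral_dominated_convergence_at_top[where w="\<lambda>x. 2 powr q * (indicator {0..} x *\<^sub>R f x)"])
    show "(\<lambda>x. indicator {0..} x *\<^sub>R f x) \<in> borel_measurable lborel" by measurable
    show "(\<lambda>x. indicator {0..A/2} x *\<^sub>R (A powr q * (f x / (A - x) powr q))) \<in> borel_measurable lborel" for A
      by measurable
    show "integrable lborel (\<lambda>x. 2 powr q * (indicator {0..} x *\<^sub>R f x))"
      using fi unfolding set_integrable_def by simp
    show "AE x in lborel. ((\<lambda>A. indicator {0..A/2} x *\<^sub>R (A powr q * (f x / (A - x) powr q))) \<longlongrightarrow> indicator {0..} x *\<^sub>R f x) at_top"
    proof (intro AE_I2)
      fix x :: real
      show "((\<lambda>A. indicator {0..A/2} x *\<^sub>R (A powr q * (f x / (A - x) powr q))) \<longlongrightarrow> indicator {0..} x *\<^sub>R f x) at_top"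
      proof (cases "0 \<le> x")
        case False
        then show ?thesis by (simp add: indicator_def)
      next
        case True
        have ev: "\<forall>\<^sub>F A in at_top. f x * (A / (A - x)) powr q = indicator {0..A/2} x *\<^sub>R (A powr q * (f x / (A - x) powr q))"
          using eventually_ge_at_top[of "2 * x + 1"]
        proof eventually_elim
          case (elim A)
          then show ?case using True by (simp add: indicator_def powr_divide)
        qed
        have "((\<lambda>A. f x * (A / (A - x)) powr q) \<longlongrightarrow> f x * 1 powr q) at_top"
          by (intro tendsto_intros ratio_lim) auto
        then have "((\<lambda>A. f x * (A / (A - x)) powr q) \<longlongrightarrow> indicator {0..} x *\<^sub>R f x) at_top"
          using True by simp
        then show ?thesis using ev by (rule Lim_transform_eventually)
      qed
    qed
    show "\<forall>\<^sub>F A in at_top. AE x in lborel. norm (indicator {0..A/2} x *\<^sub>R (A powr q * (f x / (A - x) powr q))) \<le> 2 powr q * (indicator {0..} x *\<^sub>R f x)"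
      using eventually_gt_at_top[of 0]
    proof eventually_elim
      case (elim A)
      show ?case
      proof (intro AE_I2)
        fix x :: real
        show "norm (indicator {0..A/2} x *\<^sub>R (A powr q * (f x / (A - x) powr q))) \<le> 2 powr q * (indicator {0..} x *\<^sub>R f x)"
        proof (cases "x \<in> {0..A/2}")
          case True
          then have x: "0 \<le> x" "x \<le> A/2" by auto
          have fx: "0 \<le> f x" using fnn x by auto
          have "A / (A - x) \<le> 2" using x elim by (simp add: field_simps)
          then have p: "(A / (A - x)) powr q \<le> 2 powr q"
            using x elim q by (intro powr_mono2) auto
          have "A powr q * (f x / (A - x) powr q) = f x * (A / (A - x)) powr q"
            by (simp add: powr_divide)
          also have "\<dots> \<le> f x * 2 powr q" by (rule mult_left_mono[OF p fx])
          finally show ?thesis using True x fx by (simp add: mult.commute)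
        next
          case False
          then show ?thesis using fnn by (simp add: indicator_def)
        qed
      qed
    qed
  qed
  have Tlim: "(T \<longlongrightarrow> 0) at_top"
  proof (rule tendstoI)
    fix e :: real assume e: "0 < e"
    define \<eta> where "\<eta> = e / (2 * (K + 1))"
    have \<eta>: "0 < \<eta>" unfolding \<eta>_def using e K0 by auto
    have "\<forall>\<^sub>F s in at_top. dist (s * f s) 0 < \<eta>" using tendstoD[OF ft \<eta>] .
    then obtain S0 where S0: "\<And>s. s \<ge> S0 \<Longrightarrow> \<bar>s * f s\<bar> < \<eta>"
      by (auto simp: eventually_at_top_linorder)
    show "\<forall>\<^sub>F A in at_top. dist (T A) 0 < e"
      using eventually_ge_at_top[of "max (2 * S0) 1"]
    proof eventually_elim
      case (elim A)
      then have A: "0 < A" "2 * S0 \<le> A" by auto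
      define c where "c = 2 * \<eta> / A"
      have c0: "0 \<le> c" using \<eta> A unfolding c_def by auto
      have gi: "set_integrable lborel {0..A} (\<lambda>s. A powr q * (c / (A - s) powr q))"
        using set_integrable_mult_right[OF subst_lemma(2)[OF q A(1), of "\<lambda>_. c"], of "A powr q"] by simp
      have T0: "0 \<le> T A" unfolding T_def
        by (rule set_nonneg) (use A fnn in auto)
      have "T A \<le> (LBINT s:{A/2<..A}. A powr q * (c / (A - s) powr q))"
        unfolding T_def
      proof (rule set_integral_mono)
        show "set_integrable lborel {A/2<..A} (\<lambda>s. A powr q * (f s / (A - s) powr q))"
          by (rule set_integrable_subset[OF intw[OF A(1)]]) auto
        show "set_integrable lborel {A/2<..A} (\<lambda>s. A powr q * (c / (A - s) powr q))"
          by (rule set_integrable_subset[OF gi]) auto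
        fix s assume s: "s \<in> {A/2<..A}"
        then have s0: "0 < s" "S0 \<le> s" using A by auto
        have "s * f s < \<eta>" using S0[OF s0(2)] by simp
        then have "f s < \<eta> / s" using s0 by (simp add: field_simps)
        also have "\<eta> / s \<le> c" unfolding c_def using s A \<eta> by (simp add: field_simps)
        finally have "f s \<le> c" by simp
        then have "f s / (A - s) powr q \<le> c / (A - s) powr q" by (rule divide_right_mono) simp
        then show "A powr q * (f s / (A - s) powr q) \<le> A powr q * (c / (A - s) powr q)"
          by (rule mult_left_mono) simp
      qed
      also have "\<dots> \<le> (LBINT s:{0..A/2}. A powr q * (c / (A - s) powr q)) + (LBINT s:{A/2<..A}. A powr q * (c / (A - s) powr q))"
        using set_nonneg[of "{0..A/2}" "\<lambda>s. A powr q * (c / (A - s) powr q)"] c0 by simp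
      also have "\<dots> = (LBINT s:{0..A/2} \<union> {A/2<..A}. A powr q * (c / (A - s) powr q))"
        by (rule set_integral_Un[symmetric]; (rule set_integrable_subset[OF gi])?; auto)
      also have "{0..A/2} \<union> {A/2<..A} = {0..A}" using A by auto
      also have "(LBINT s:{0..A}. A powr q * (c / (A - s) powr q)) = A powr q * (LBINT s:{0..A}. c / (A - s) powr q)"
        by (rule set_integral_mult_right)
      also have "\<dots> = A powr q * (A powr (1 - q) * (LBINT u:{0..1}. c / u powr q))"
        using subst_lemma(3)[OF q A(1), of "\<lambda>_. c"] by simp
      also have "(LBINT u:{0..1}. c / u powr q) = c * K"
        unfolding K_def using set_integral_mult_right[where a=c and M=lborel and A="{0..1}" and f="\<lambda>u. 1 / u powr q"] by simp
      also have "A powr q * (A powr (1 - q) * (c * K)) = 2 * \<eta> * K"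
        using A unfolding c_def by (simp add: powr_diff field_simps)
      also have "2 * \<eta> * K < e"
        unfolding \<eta>_def using e K0 by (simp add: field_simps)
      finally show ?case using T0 by simp
    qed
  qed
  have "((\<lambda>A. M A + T A) \<longlongrightarrow> (LBINT s:{0..}. f s) + 0) at_top"
    by (intro tendsto_add Mlim Tlim)
  then have "((\<lambda>A. M A + T A) \<longlongrightarrow> (LBINT s:{0..}. f s)) at_top" by simp
  moreover have "\<forall>\<^sub>F A in at_top. M A + T A = A powr q * (LBINT s:{0..A}. f s / (A - s) powr q)"
    using eventually_gt_at_top[of 0] by eventually_elim (simp add: split)
  ultimately show ?thesis by (rule Lim_transform_eventually)
qed



lemma int_u: "(LBINT u:{0..1::real}. m * u) = m / 2"
proof -
  have "integral\<^sup>L lborel (\<lambda>x. indicator {0..1::real} x *\<^sub>R (m * x)) = m * 1^2/2 - m * 0^2/2"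
    by (rule integral_FTC_atLeastAtMost)
       (auto intro!: derivative_eq_intros continuous_intros simp flip: has_real_derivative_iff_has_vector_derivative)
  then show ?thesis unfolding set_lebesgue_integral_def by simp
qed

lemma G_facts:
  fixes G :: "real \<Rightarrow> real"
  assumes sG: "standing_G G"
  shows "\<And>x. (G has_real_derivative deriv G x) (at x)"
    and "continuous_on UNIV (deriv G)"
    and "G 0 = 0"
    and "set_integrable lborel {0..} (deriv G)"
    and "(G \<longlongrightarrow> (LBINT s:{0..}. deriv G s)) at_top"
    and "Lim at_top G = (LBINT s:{0..}. deriv G s)"
    and "0 < (LBINT s:{0..}. deriv G s)"
proof -
  have sm: "smooth_real G" and odd: "\<And>s. G (- s) = - G s" and pos: "\<And>s. deriv G s > 0"
    and si: "integrable lborel (\<lambda>s. s * deriv G s)"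
    using sG unfolding standing_G_def by auto
  show D: "(G has_real_derivative deriv G x) (at x)" for x
  proof -
    have "((deriv ^^ 0) G) differentiable (at x)" using sm unfolding smooth_real_def by blast
    then show ?thesis unfolding DERIV_deriv_iff_real_differentiable by simp
  qed
  have "(deriv G) differentiable (at x)" for x
  proof -
    have "((deriv ^^ 1) G) differentiable (at x)" using sm unfolding smooth_real_def by blast
    then show ?thesis by simp
  qed
  then show gc: "continuous_on UNIV (deriv G)"
    by (intro continuous_at_imp_continuous_on) (auto intro: differentiable_imp_continuous_within)
  show G0: "G 0 = 0" using odd[of 0] by simp
  have sgi: "set_integrable lborel {1..} (\<lambda>s. s * deriv G s)"
    unfolding set_integrable_def by (rule integrable_mult_indicator) (use si in auto)
  have i1: "set_integrable lborel {0..1} (deriv G)"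
    by (rule borel_integrable_atLeastAtMost') (rule continuous_on_subset[OF gc], auto)
  have i2: "set_integrable lborel {1..} (deriv G)"
  proof (rule set_integrable_bound[OF sgi])
    show "set_borel_measurable lborel {1..} (deriv G)"
    proof -
      have gm[measurable]: "deriv G \<in> borel_measurable borel" by (rule borel_measurable_continuous_onI[OF gc])
      show ?thesis unfolding set_borel_measurable_def by measurable
    qed
    show "AE x in lborel. x \<in> {1..} \<longrightarrow> norm (deriv G x) \<le> norm (x * deriv G x)"
    proof (intro AE_I2 impI)
      fix x :: real assume "x \<in> {1..}"
      then show "norm (deriv G x) \<le> norm (x * deriv G x)"
        using pos[of x] by (simp add: abs_mult)
    qed
  qed
  have "set_integrable lborel ({0..1} \<union> {1..}) (deriv G)"
    by (rule set_integrable_Un[OF i1 i2]) auto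
  moreover have "{0..1} \<union> {1..} = {0::real..}" by auto
  ultimately show gi: "set_integrable lborel {0..} (deriv G)" by simp
  have "((\<lambda>b. LBINT s:{0..b}. deriv G s) \<longlongrightarrow> (LBINT s:{0..}. deriv G s)) at_top"
    by (rule tendsto_set_lebesgue_integral_at_top[OF _ gi]) auto
  moreover have "\<forall>\<^sub>F b in at_top. (LBINT s:{0..b}. deriv G s) = G b"
    using eventually_ge_at_top[of 0]
  proof eventually_elim
    case (elim b)
    have "integral\<^sup>L lborel (\<lambda>x. indicator {0..b} x *\<^sub>R deriv G x) = G b - G 0"
      by (rule integral_FTC_atLeastAtMost[OF elim])
         (auto intro!: continuous_on_subset[OF gc] has_field_derivative_at_within[OF D] simp flip: has_real_derivative_iff_has_vector_derivative)
    then show ?case unfolding set_lebesgue_integral_def using G0 by simp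
  qed
  ultimately show lim: "(G \<longlongrightarrow> (LBINT s:{0..}. deriv G s)) at_top"
    by (rule Lim_transform_eventually)
  then show "Lim at_top G = (LBINT s:{0..}. deriv G s)"
    by (intro tendsto_Lim) auto
  have "G 0 < G 1" by (rule DERIV_pos_imp_increasing[of 0 1 G]) (simp, blast intro: D pos)
  have "G 1 \<le> (LBINT s:{0..}. deriv G s)"
  proof (rule tendsto_lowerbound[OF lim])
    show "\<forall>\<^sub>F x in at_top. G 1 \<le> G x"
      using eventually_ge_at_top[of 1]
    proof eventually_elim
      case (elim x)
      show ?case
      proof (cases "x = 1")
        case False
        then have "G 1 < G x" using elim by (intro DERIV_pos_imp_increasing[of 1 x G]) (simp, blast intro: D pos)
        then show ?thesis by simp
      qed simp
    qed
  qed simp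
  then show "0 < (LBINT s:{0..}. deriv G s)" using \<open>G 0 < G 1\<close> G0 by simp
qed



theorem lemma5p2:
  fixes p :: real and G :: "real \<Rightarrow> real"
  assumes "1 < p"
    and "standing_G G"
    and "\<exists>\<epsilon>>0. ((\<lambda>z. z powr (2 + \<epsilon>) * deriv G z) \<longlongrightarrow> 0) at_top"
  shows "continuous_on {0<..} (H_fun p G)
    \<and> bounded (H_fun p G ` {0<..})
    \<and> ((H_fun p G) \<longlongrightarrow> 0) (at_right 0)
    \<and> ((H_fun p G) \<longlongrightarrow> 2 / c_p G * (LBINT s:{0..}. s * deriv G s)) at_top"
proof -
  define q where "q = 1 / p"
  have q: "0 < q" "q < 1" unfolding q_def using assms(1) by auto
  define g where "g = deriv G"
  have D: "\<And>x. (G has_real_derivative g x) (at x)" and gc: "continuous_on UNIV g"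
    and gi: "set_integrable lborel {0..} g"
    and Lim: "Lim at_top G = (LBINT s:{0..}. g s)" and L0: "0 < (LBINT s:{0..}. g s)"
    using G_facts[OF assms(2)] unfolding g_def by auto
  have pos: "\<And>s. 0 < g s" and si: "integrable lborel (\<lambda>s. s * g s)"
    using assms(2) unfolding standing_G_def g_def by auto
  define L where "L = (LBINT s:{0..}. g s)"
  define S where "S = (LBINT s:{0..}. s * g s)"
  have sgc: "continuous_on UNIV (\<lambda>s. s * g s)" by (intro continuous_intros gc)
  have sgi: "set_integrable lborel {0..} (\<lambda>s. s * g s)"
    unfolding set_integrable_def by (rule integrable_mult_indicator) (use si in auto)
  obtain \<epsilon> where \<epsilon>: "\<epsilon> > 0" "((\<lambda>z. z powr (2 + \<epsilon>) * g z) \<longlongrightarrow> 0) at_top"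
    using assms(3) unfolding g_def by auto
  have pw: "s * s \<le> s powr (2 + \<epsilon>)" if "1 \<le> s" for s
  proof -
    have "s * s = s powr 2" using that by (simp add: powr_numeral power2_eq_square)
    also have "\<dots> \<le> s powr (2 + \<epsilon>)" using that \<epsilon> by (intro powr_mono) auto
    finally show ?thesis .
  qed
  have t2: "((\<lambda>s. s * (s * g s)) \<longlongrightarrow> 0) at_top"
  proof (rule tendsto_sandwich[OF _ _ tendsto_const \<epsilon>(2)])
    show "\<forall>\<^sub>F s in at_top. 0 \<le> s * (s * g s)"
      using eventually_ge_at_top[of 0] by eventually_elim (use pos in \<open>simp add: less_imp_le\<close>)
    show "\<forall>\<^sub>F s in at_top. s * (s * g s) \<le> s powr (2 + \<epsilon>) * g s"
      using eventually_ge_at_top[of 1]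
    proof eventually_elim
      case (elim s)
      have "s * (s * g s) = (s * s) * g s" by simp
      also have "\<dots> \<le> s powr (2 + \<epsilon>) * g s" using pw[OF elim] pos[of s] by (intro mult_right_mono) auto
      finally show ?case .
    qed
  qed
  have t1: "((\<lambda>s. s * g s) \<longlongrightarrow> 0) at_top"
  proof (rule tendsto_sandwich[OF _ _ tendsto_const t2])
    show "\<forall>\<^sub>F s in at_top. 0 \<le> s * g s"
      using eventually_ge_at_top[of 0] by eventually_elim (use pos in \<open>simp add: less_imp_le\<close>)
    show "\<forall>\<^sub>F s in at_top. s * g s \<le> s * (s * g s)"
      using eventually_ge_at_top[of 1]
    proof eventually_elim
      case (elim s)
      have "1 * (s * g s) \<le> s * (s * g s)" using elim pos[of s] by (intro mult_right_mono) auto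
      then show ?case by simp
    qed
  qed
  have limN: "((\<lambda>A. A powr q * (LBINT s:{0..A}. s * g s / (A - s) powr q)) \<longlongrightarrow> S) at_top"
    unfolding S_def using main_limit[OF q sgc _ sgi t2] pos by (simp add: less_imp_le)
  have limD: "((\<lambda>A. A powr q * (LBINT s:{0..A}. g s / (A - s) powr q)) \<longlongrightarrow> L) at_top"
    unfolding L_def using main_limit[OF q gc _ gi t1] pos by (simp add: less_imp_le)
  define J1 where "J1 A = (LBINT u:{0..1}. (A - A*u) * g (A - A*u) / u powr q)" for A
  define J0 where "J0 A = (LBINT u:{0..1}. g (A - A*u) / u powr q)" for A
  have HJ: "H_fun p G A = J1 A / J0 A" if A: "0 < A" for A
  proof -
    have "H_fun p G A = (A powr (1-q) * J1 A) / (A powr (1-q) * J0 A)"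
      unfolding H_fun_def J1_def J0_def q_def[symmetric] g_def[symmetric]
      using subst_lemma(3)[OF q A sgc] subst_lemma(3)[OF q A gc] by simp
    also have "\<dots> = J1 A / J0 A" using A by simp
    finally show ?thesis .
  qed
  have J0pos: "0 < J0 A" if A: "0 < A" for A
  proof -
    obtain m where m: "m \<in> g ` {0..A}" "\<And>y. y \<in> g ` {0..A} \<Longrightarrow> m \<le> y"
      using compact_attains_inf[of "g ` {0..A}"] compact_continuous_image[OF continuous_on_subset[OF gc]] A
      by fastforce
    have m0: "0 < m" using m(1) pos by auto
    have "m / 2 = (LBINT u:{0..1}. m * u)" by (rule int_u[symmetric])
    also have "\<dots> \<le> J0 A" unfolding J0_def
    proof (rule set_integral_mono)
      show "set_integrable lborel {0..1} (\<lambda>u. m * u)"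
        by (rule borel_integrable_atLeastAtMost') (intro continuous_intros)
      show "set_integrable lborel {0..1} (\<lambda>u. g (A - A * u) / u powr q)"
        by (rule subst_lemma(1)[OF q A gc])
      fix u :: real assume u: "u \<in> {0..1}"
      show "m * u \<le> g (A - A * u) / u powr q"
      proof (cases "u = 0")
        case False
        then have u0: "0 < u" using u by auto
        have "A - A*u \<in> {0..A}" using u A by (auto simp: mult_le_cancel_left1)
        then have gm: "m \<le> g (A - A*u)" using m(2) by auto
        have "u powr q \<le> 1" using u u0 q by (intro powr_le1) auto
        have "m * u \<le> g (A - A*u) * 1" using gm u m0 by (intro mult_mono) auto
        also have "\<dots> \<le> g (A - A*u) / u powr q"
          using \<open>u powr q \<le> 1\<close> u0 pos[of "A - A*u"] by (simp add: field_simps)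
        finally show ?thesis by simp
      qed simp
    qed
    finally show ?thesis using m0 by linarith
  qed
  have Hb: "0 \<le> H_fun p G A \<and> H_fun p G A \<le> A" if A: "0 < A" for A
  proof -
    have J1n: "0 \<le> J1 A" unfolding J1_def
      by (rule set_nonneg) (use A pos in \<open>auto simp: mult_le_cancel_left1 less_imp_le\<close>)
    have "J1 A \<le> (LBINT u:{0..1}. A * (g (A - A*u) / u powr q))" unfolding J1_def
    proof (rule set_integral_mono)
      show "set_integrable lborel {0..1} (\<lambda>u. (A - A * u) * g (A - A * u) / u powr q)"
        by (rule subst_lemma(1)[OF q A sgc])
      show "set_integrable lborel {0..1} (\<lambda>u. A * (g (A - A * u) / u powr q))"
        using set_integrable_mult_right[OF subst_lemma(1)[OF q A gc], of A] by simp
      fix u :: real assume u: "u \<in> {0..1}"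
      have "(A - A*u) * (g (A - A * u) / u powr q) \<le> A * (g (A - A * u) / u powr q)"
        using u A pos[of "A - A*u"] by (intro mult_right_mono) auto
      then show "(A - A * u) * g (A - A * u) / u powr q \<le> A * (g (A - A * u) / u powr q)" by simp
    qed
    also have "\<dots> = A * J0 A" unfolding J0_def by (rule set_integral_mult_right)
    finally have "J1 A \<le> A * J0 A" .
    then show ?thesis using HJ[OF A] J0pos[OF A] J1n by (simp add: divide_le_eq)
  qed
  have cont: "continuous_on {0<..} (H_fun p G)"
  proof -
    have "continuous_on {0<..} (\<lambda>A. J1 A / J0 A)"
    proof (intro continuous_on_divide)
      show "continuous_on {0<..} J1" unfolding J1_def
        by (intro continuous_at_imp_continuous_on ballI J_cont[OF q sgc])
      show "continuous_on {0<..} J0" unfolding J0_def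
        by (intro continuous_at_imp_continuous_on ballI J_cont[OF q gc])
      show "\<forall>x\<in>{0<..}. J0 x \<noteq> 0" using J0pos by fastforce
    qed
    then show ?thesis by (rule continuous_on_cong[THEN iffD1, rotated 2]) (auto simp: HJ)
  qed
  have at0: "((H_fun p G) \<longlongrightarrow> 0) (at_right 0)"
  proof -
    have ev: "\<forall>\<^sub>F A in at_right 0. 0 \<le> H_fun p G A \<and> H_fun p G A \<le> A"
      using eventually_at_right_less[of "0::real"] by eventually_elim (rule Hb)
    show ?thesis
    proof (rule tendsto_sandwich[where f="\<lambda>_. 0" and h="\<lambda>A. A"])
      show "\<forall>\<^sub>F A in at_right 0. 0 \<le> H_fun p G A" using ev by eventually_elim simp
      show "\<forall>\<^sub>F A in at_right 0. H_fun p G A \<le> A" using ev by eventually_elim simp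
      show "((\<lambda>A::real. A) \<longlongrightarrow> 0) (at_right 0)" by (rule tendsto_ident_at)
    qed simp
  qed
  have attop: "((H_fun p G) \<longlongrightarrow> S / L) at_top"
  proof -
    have "((\<lambda>A. (A powr q * (LBINT s:{0..A}. s * g s / (A - s) powr q)) / (A powr q * (LBINT s:{0..A}. g s / (A - s) powr q))) \<longlongrightarrow> S / L) at_top"
      using L0 unfolding L_def[symmetric] by (intro tendsto_divide limN limD) simp
    moreover have "\<forall>\<^sub>F A in at_top. (A powr q * (LBINT s:{0..A}. s * g s / (A - s) powr q)) / (A powr q * (LBINT s:{0..A}. g s / (A - s) powr q)) = H_fun p G A"
      using eventually_gt_at_top[of 0]
    proof eventually_elim
      case (elim A)
      then show ?case unfolding H_fun_def g_def[symmetric] q_def[symmetric] by simp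
    qed
    ultimately show ?thesis by (rule Lim_transform_eventually)
  qed
  have bnd: "bounded (H_fun p G ` {0<..})"
  proof -
    have "\<forall>\<^sub>F A in at_top. dist (H_fun p G A) (S / L) < 1" using tendstoD[OF attop, of 1] by simp
    then obtain R where R: "\<And>A. A \<ge> R \<Longrightarrow> dist (H_fun p G A) (S / L) < 1"
      by (auto simp: eventually_at_top_linorder)
    show ?thesis unfolding bounded_iff
    proof (intro exI ballI)
      fix x assume "x \<in> H_fun p G ` {0<..}"
      then obtain A where A: "0 < A" "x = H_fun p G A" by auto
      show "norm x \<le> max R (\<bar>S / L\<bar> + 1)"
      proof (cases "A \<ge> R")
        case True
        then have "\<bar>H_fun p G A - S / L\<bar> < 1" using R[of A] by (simp add: dist_real_def)
        then have "\<bar>H_fun p G A\<bar> \<le> \<bar>S / L\<bar> + 1" by linarith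
        then show ?thesis using A by (simp del: abs_divide)
      next
        case False
        then show ?thesis using Hb[OF A(1)] A by auto
      qed
    qed
  qed
  have "2 / c_p G * (LBINT s:{0..}. s * deriv G s) = S / L"
    unfolding c_p_def Lim S_def L_def g_def by simp
  then show ?thesis using cont bnd at0 attop by simp
qed


end
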